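(* For every $w\in\Sigma^+$ and every $k\in\mathbb{N}$ there exist $p\in\mathbb{N}$ with $p\ge1$ and $v\in\Sigma^*$ such that $v\neq w^p$ and $w^p\equiv_k v$.
   Context: $\Sigma$ is a fixed finite alphabet. For $w \in \Sigma^*$, $\mathsf{Facs}(w)$ is the set of all factors (contiguous subwords, including $\varepsilon$ and $w$) of $w$. The structure $\mathfrak{A}_w$ representing $w$ has universe $\mathsf{Facs}(w)\cup\{\perp\}$, a ternary relation $R_\circ=\{(x,y,z)\in\mathsf{Facs}(w)^3 : x=y\cdot z\}$, for each letter $\mathtt{a}\in\Sigma$ a constant interpreted as $\mathtt{a}$ if $\mathtt{a}$ occurs in $w$ and as $\perp$ otherwise, and a constant $\varepsilon$ interpreted as the empty word. The $k$-round Ehrenfeucht–Fraïssé game on $\mathfrak{A}_w,\mathfrak{A}_v$: in each round $i$, Spoiler picks one of the two structures and an element of its universe, Duplicator answers with an element of the other structure's universe; let $a_i$ (in $\mathfrak{A}_w$) and $b_i$ (in $\mathfrak{A}_v$) be the chosen elements. Duplicator wins if the tuples $(a_1,\dots,a_k,\vec c^{\,\mathfrak{A}_w})$ and $(b_1,\dots,b_k,\vec c^{\,\mathfrak{A}_v})$, where $\vec c$ lists the interpretations of all constants, form a partial isomorphism: for all indices $i,j,l$, $a_i$ equals the interpretation of a constant $c$ iff $b_i$ equals the interpretation of $c$; $a_i=a_j$ iff $b_i=b_j$; and $a_i=a_j\cdot a_l$ iff $b_i=b_j\cdot b_l$. We write $w\equiv_k v$ if Duplicator has a winning strategy in the $k$-round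 game. *)

theory Defs
  imports "HOL-Library.Sublist"
begin

text \<open>The alphabet Sigma is the finite type 'a.  Words are lists.
  Elements of the structure A_w: None is bottom, Some u is the factor u.\<close>

definition facs :: "'a list \<Rightarrow> 'a list set" where
  "facs w = {u. sublist u w}"

definition univ_of :: "'a list \<Rightarrow> 'a list option set" where
  "univ_of w = Some ` facs w \<union> {None}"

definition rel_cat :: "'a list \<Rightarrow> 'a list option \<Rightarrow> 'a list option \<Rightarrow> 'a list option \<Rightarrow> bool" where
  "rel_cat w x y z = (\<exists>x' y' z'. x = Some x' \<and> y = Some y' \<and> z = Some z' \<and>
      x' \<in> facs w \<and> y' \<in> facs w \<and> z' \<in> facs w \<and> x' = y' @ z')"

text \<open>Constants: Inr None is epsilon, Inr (Some a) is the letter constant a.\<close>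
definition const_interp :: "'a list \<Rightarrow> 'a option \<Rightarrow> 'a list option" where
  "const_interp w c = (case c of None \<Rightarrow> Some []
     | Some a \<Rightarrow> (if a \<in> set w then Some [a] else None))"

definition ext_tuple :: "'a list \<Rightarrow> 'a list option list \<Rightarrow> nat + 'a option \<Rightarrow> 'a list option" where
  "ext_tuple w as i = (case i of Inl n \<Rightarrow> as ! n | Inr c \<Rightarrow> const_interp w c)"

definition ext_index :: "nat \<Rightarrow> (nat + 'a option) set" where
  "ext_index m = Inl ` {..<m} \<union> range Inr"

definition partial_iso ::
  "'a list \<Rightarrow> 'a list \<Rightarrow> 'a list option list \<Rightarrow> 'a list option list \<Rightarrow> bool" where
  "partial_iso w v as bs =
     (length as = length bs \<and>
      (\<forall>i\<in>ext_index (length as). \<forall>j\<in>ext_index (length as). \<forall>l\<in>ext_index (length as).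
         (ext_tuple w as i = ext_tuple w as j \<longleftrightarrow> ext_tuple v bs i = ext_tuple v bs j) \<and>
         (rel_cat w (ext_tuple w as i) (ext_tuple w as j) (ext_tuple w as l) \<longleftrightarrow>
          rel_cat v (ext_tuple v bs i) (ext_tuple v bs j) (ext_tuple v bs l))))"

fun dup_wins :: "nat \<Rightarrow> 'a list \<Rightarrow> 'a list \<Rightarrow> 'a list option list \<Rightarrow> 'a list option list \<Rightarrow> bool" where
  "dup_wins 0 w v as bs = partial_iso w v as bs"
| "dup_wins (Suc k) w v as bs =
     ((\<forall>a\<in>univ_of w. \<exists>b\<in>univ_of v. dup_wins k w v (as @ [a]) (bs @ [b])) \<and>
      (\<forall>b\<in>univ_of v. \<exists>a\<in>univ_of w. dup_wins k w v (as @ [a]) (bs @ [b])))"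

definition ef_equiv :: "nat \<Rightarrow> 'a list \<Rightarrow> 'a list \<Rightarrow> bool" where
  "ef_equiv k w v = dup_wins k w v [] []"

definition word_pow :: "'a list \<Rightarrow> nat \<Rightarrow> 'a list" where
  "word_pow w p = concat (replicate p w)"

end

theory Submission
  imports Defs "HOL-Library.FuncSet"
begin

lemma finite_ext_index: "finite (ext_index m :: (nat + 'a::finite option) set)"
  unfolding ext_index_def by simp

definition atom_g :: "nat \<Rightarrow> 'a list \<Rightarrow> 'a list option list \<Rightarrow>
   ((nat + 'a option) \<times> (nat + 'a option) \<times> (nat + 'a option)) \<Rightarrow> bool \<times> bool" where
  "atom_g m w as = restrict (\<lambda>(i,j,l). (ext_tuple w as i = ext_tuple w as j,
      rel_cat w (ext_tuple w as i) (ext_tuple w as j) (ext_tuple w as l)))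
     (ext_index m \<times> ext_index m \<times> ext_index m)"

lemma base_case:
  "\<exists>(g :: 'a::finite list \<Rightarrow> 'a list option list \<Rightarrow> ((nat + 'a option) \<times> (nat + 'a option) \<times> (nat + 'a option)) \<Rightarrow> bool \<times> bool) G. finite G \<and> (\<forall>w as. g w as \<in> G) \<and>
     (\<forall>w v as bs. length as = m \<longrightarrow> length bs = m \<longrightarrow> g w as = g v bs \<longrightarrow> dup_wins 0 w v as bs)"
proof (intro exI[of _ "atom_g m"] exI[of _ "PiE (ext_index m \<times> ext_index m \<times> ext_index m) (\<lambda>_. UNIV)"] conjI allI impI)
  let ?E = "ext_index m :: (nat + 'a option) set"
  show "finite (PiE (?E \<times> ?E \<times> ?E) (\<lambda>_. UNIV :: (bool \<times> bool) set))"
    by (intro finite_PiE) (auto simp: finite_ext_index)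
  show "atom_g m w as \<in> PiE (?E \<times> ?E \<times> ?E) (\<lambda>_. UNIV)" for w :: "'a list" and as
    unfolding atom_g_def by auto
  fix w v :: "'a list" and as bs
  assume l: "length as = m" "length bs = m" and e: "atom_g m w as = atom_g m v bs"
  show "dup_wins 0 w v as bs"
    unfolding dup_wins.simps partial_iso_def
  proof (intro conjI ballI)
    show "length as = length bs" using l by simp
    fix i j l' :: "nat + 'a option" assume h: "i \<in> ext_index (length as)" "j \<in> ext_index (length as)" "l' \<in> ext_index (length as)"
    have "atom_g m w as (i,j,l') = atom_g m v bs (i,j,l')" using e by simp
    with h l show "(ext_tuple w as i = ext_tuple w as j) = (ext_tuple v bs i = ext_tuple v bs j)"
      and "rel_cat w (ext_tuple w as i) (ext_tuple w as j) (ext_tuple w as l') =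
         rel_cat v (ext_tuple v bs i) (ext_tuple v bs j) (ext_tuple v bs l')"
      unfolding atom_g_def by auto
  qed
qed

lemma nat_encode0:
  assumes "finite (G :: 'b set)"
    and "\<forall>w as. (g :: 'a list \<Rightarrow> 'a list option list \<Rightarrow> 'b) w as \<in> G"
    and "\<forall>w v as bs. length as = m \<longrightarrow> length bs = m \<longrightarrow> g w as = g v bs \<longrightarrow> dup_wins k w v as bs"
  shows "\<exists>(g' :: 'a list \<Rightarrow> 'a list option list \<Rightarrow> nat) G'. finite G' \<and> (\<forall>w as. g' w as \<in> G') \<and>
     (\<forall>w v as bs. length as = m \<longrightarrow> length bs = m \<longrightarrow> g' w as = g' v bs \<longrightarrow> dup_wins k w v as bs)"
proof -
  obtain f :: "'b \<Rightarrow> nat" where f: "bij_betw f G {0..<card G}"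
    using assms(1) ex_bij_betw_finite_nat by blast
  show ?thesis
  proof (intro exI[of _ "\<lambda>w as. f (g w as)"] exI[of _ "{0..<card G}"] conjI allI impI)
    show "finite {0..<card G}" by simp
    show "f (g w as) \<in> {0..<card G}" for w as using bij_betw_apply[OF f] assms(2) by blast
    fix w v as bs assume "length as = m" "length bs = m" "f (g w as) = f (g v bs)"
    moreover have "g w as = g v bs"
    proof -
      have "inj_on f G" using f by (rule bij_betw_imp_inj_on)
      moreover have "g w as \<in> G" "g v bs \<in> G" using assms(2) by auto
      ultimately show ?thesis using \<open>f (g w as) = f (g v bs)\<close> by (simp add: inj_on_eq_iff)
    qed
    ultimately show "dup_wins k w v as bs" using assms(3) by blast
  qed
qed

lemma nat_encode:
  assumes "\<exists>(g :: 'a list \<Rightarrow> 'a list option list \<Rightarrow> 'b) G. finite G \<and> (\<forall>w as. g w as \<in> G) \<and>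
     (\<forall>w v as bs. length as = m \<longrightarrow> length bs = m \<longrightarrow> g w as = g v bs \<longrightarrow> dup_wins k w v as bs)"
  shows "\<exists>(g' :: 'a list \<Rightarrow> 'a list option list \<Rightarrow> nat) G'. finite G' \<and> (\<forall>w as. g' w as \<in> G') \<and>
     (\<forall>w v as bs. length as = m \<longrightarrow> length bs = m \<longrightarrow> g' w as = g' v bs \<longrightarrow> dup_wins k w v as bs)"
proof -
  obtain g :: "'a list \<Rightarrow> 'a list option list \<Rightarrow> 'b" and G where
    "finite G" "\<forall>w as. g w as \<in> G"
    "\<forall>w v as bs. length as = m \<longrightarrow> length bs = m \<longrightarrow> g w as = g v bs \<longrightarrow> dup_wins k w v as bs"
    using assms by (elim exE conjE)
  then show ?thesis by (rule nat_encode0)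
qed

lemma finite_index:
  "\<exists>(g :: 'a::finite list \<Rightarrow> 'a list option list \<Rightarrow> nat) G. finite G \<and> (\<forall>w as. g w as \<in> G) \<and>
     (\<forall>w v as bs. length as = m \<longrightarrow> length bs = m \<longrightarrow> g w as = g v bs \<longrightarrow> dup_wins k w v as bs)"
proof (induction k arbitrary: m)
  case 0
  show ?case by (rule nat_encode[OF base_case])
next
  case (Suc k)
  obtain g :: "'a list \<Rightarrow> 'a list option list \<Rightarrow> nat" and G where G: "finite G" "\<forall>w as. g w as \<in> G"
    and gi: "\<forall>w v as bs. length as = Suc m \<longrightarrow> length bs = Suc m \<longrightarrow> g w as = g v bs \<longrightarrow> dup_wins k w v as bs"
    using Suc.IH[of "Suc m"] by (elim exE conjE)
  let ?h = "\<lambda>w as. (\<lambda>a. g w (as @ [a])) ` univ_of w"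
  have "finite (Pow G)" using G by simp
  moreover have "\<forall>w as. ?h w as \<in> Pow G" using G by auto
  moreover have "\<forall>w v as bs. length as = m \<longrightarrow> length bs = m \<longrightarrow> ?h w as = ?h v bs \<longrightarrow> dup_wins (Suc k) w v as bs"
  proof (intro allI impI)
    fix w v :: "'a list" and as bs
    assume l: "length as = m" "length bs = m" and e: "?h w as = ?h v bs"
    show "dup_wins (Suc k) w v as bs"
      unfolding dup_wins.simps
    proof (intro conjI ballI)
      fix a assume "a \<in> univ_of w"
      then have "g w (as @ [a]) \<in> ?h v bs" using e by blast
      then obtain b where "b \<in> univ_of v" "g w (as @ [a]) = g v (bs @ [b])" by blast
      moreover have "dup_wins k w v (as @ [a]) (bs @ [b])"
        using gi[rule_format, of "as @ [a]" "bs @ [b]" w v] l \<open>g w (as @ [a]) = g v (bs @ [b])\<close> by simp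
      ultimately show "\<exists>b\<in>univ_of v. dup_wins k w v (as @ [a]) (bs @ [b])" by blast
    next
      fix b assume "b \<in> univ_of v"
      then have "g v (bs @ [b]) \<in> ?h w as" using e by blast
      then obtain a where "a \<in> univ_of w" "g v (bs @ [b]) = g w (as @ [a])" by blast
      moreover have "dup_wins k w v (as @ [a]) (bs @ [b])"
        using gi[rule_format, of "as @ [a]" "bs @ [b]" w v] l \<open>g v (bs @ [b]) = g w (as @ [a])\<close> by simp
      ultimately show "\<exists>a\<in>univ_of w. dup_wins k w v (as @ [a]) (bs @ [b])" by blast
    qed
  qed
  ultimately show ?case by (intro nat_encode exI conjI)
qed

lemma length_word_pow: "length (word_pow w p) = p * length w"
  unfolding word_pow_def by (simp add: length_concat sum_list_replicate)

theorem proposition4p9: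
  fixes w :: "'a::finite list" and k :: nat
  assumes "w \<noteq> []"
  shows "\<exists>p::nat. p \<ge> 1 \<and> (\<exists>v :: 'a list. v \<noteq> word_pow w p \<and> ef_equiv k (word_pow w p) v)"
proof -
  obtain g :: "'a list \<Rightarrow> 'a list option list \<Rightarrow> nat" and G where G: "finite G" "\<forall>w as. g w as \<in> G"
    and gi: "\<forall>w v as bs. length as = 0 \<longrightarrow> length bs = 0 \<longrightarrow> g w as = g v bs \<longrightarrow> dup_wins k w v as bs"
    using finite_index[of 0 k] by (elim exE conjE)
  define f where "f = (\<lambda>p. g (word_pow w p) [])"
  define A where "A = {1..card G + 1}"
  have sub: "f ` A \<subseteq> G"
  proof (rule image_subsetI)
    fix x show "f x \<in> G" unfolding f_def using G(2) by blast
  qed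
  have "\<not> inj_on f A"
  proof
    assume "inj_on f A"
    then have "card (f ` A) = card A" by (rule card_image)
    moreover have "card (f ` A) \<le> card G" using card_mono[OF G(1) sub] .
    moreover have "card A = card G + 1" unfolding A_def by simp
    ultimately show False by linarith
  qed
  then obtain p q where pq: "p \<in> A" "q \<in> A" "p \<noteq> q" "f p = f q"
    unfolding inj_on_def by blast
  have lw: "length w \<noteq> 0" using assms by simp
  have "word_pow w q \<noteq> word_pow w p"
  proof
    assume "word_pow w q = word_pow w p"
    then have "q * length w = p * length w" by (metis length_word_pow)
    then have "q = p" using lw by auto
    with pq(3) show False by simp
  qed
  moreover have "dup_wins k (word_pow w p) (word_pow w q) [] []"
    using gi[rule_format, of "[]" "[]" "word_pow w p" "word_pow w q"] pq(4) unfolding f_def by simp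
  moreover have "p \<ge> 1" using pq(1) unfolding A_def by simp
  ultimately show ?thesis unfolding ef_equiv_def by blast
qed

end
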